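(* Let $d\ge5$ and $(z_i)_{i\ge1}$ be points in $\mathbb{R}^d$. Let $(X^i_t)_{t\ge0}$, $i\ge1$, be independent Brownian motions on $\mathbb{R}^d$ with $X^i_0=z_i$, with joint expectation $E$. For $z\in\mathbb{R}^d$ let $f_z=1_{B(z,1)}$, and for $L>0$ and indices $i,j$ set $$F_L(i,j)=\int_{L/2}^L\int_{L/2}^L\int_{\mathbb{R}^d\times\mathbb{R}^d}g(x,y)f_{X^i_s}(x)f_{X^j_t}(y)\,dx\,dy\,ds\,dt.$$ Then there is $C=C(d)$ such that for all positive integers $M$ and all $L\ge2$, $$E\Big[\sum_{i,j=1}^M F_L(i,j)\Big]\le C(ML+M^2L^{3-d/2}).$$
   Context: $g(x,y)=\int_0^\infty(2\pi t)^{-d/2}e^{-|x-y|^2/(2t)}dt$ is the Green function of Brownian motion; $B(z,1)$ is the closed Euclidean ball. *)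

theory Defs
  imports "HOL-Probability.Probability"
begin

definition heat_kernel :: "real \<Rightarrow> real ^ 'd \<Rightarrow> real" where
  "heat_kernel h x = (2 * pi * h) powr (- real CARD('d) / 2) * exp (- (norm x)\<^sup>2 / (2 * h))"

definition green :: "real ^ 'd \<Rightarrow> real ^ 'd \<Rightarrow> ennreal" where
  "green x y = (\<integral>\<^sup>+ t. ennreal (heat_kernel t (x - y)) * indicator {0<..} t \<partial>lborel)"

definition brownian_motion :: "'a measure \<Rightarrow> (real \<Rightarrow> 'a \<Rightarrow> real ^ 'd) \<Rightarrow> real ^ 'd \<Rightarrow> bool" where
  "brownian_motion P X z \<longleftrightarrow>
     (\<forall>t. X t \<in> borel_measurable P) \<and>
     (\<forall>\<omega>\<in>space P. X 0 \<omega> = z) \<and>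
     (\<forall>\<omega>\<in>space P. continuous_on {0..} (\<lambda>t. X t \<omega>)) \<and>
     (\<forall>(s::nat \<Rightarrow> real) n. strict_mono s \<and> 0 \<le> s 0 \<longrightarrow>
        prob_space.indep_vars P (\<lambda>_. borel) (\<lambda>k \<omega>. X (s (Suc k)) \<omega> - X (s k) \<omega>) {..<n}) \<and>
     (\<forall>s t. 0 \<le> s \<and> s < t \<longrightarrow>
        distributed P lborel (\<lambda>\<omega>. X t \<omega> - X s \<omega>) (\<lambda>x. ennreal (heat_kernel (t - s) x)))"

definition F_L :: "(nat \<Rightarrow> real \<Rightarrow> 'a \<Rightarrow> real ^ 'd) \<Rightarrow> real \<Rightarrow> nat \<Rightarrow> nat \<Rightarrow> 'a \<Rightarrow> ennreal" where
  "F_L X L i j \<omega> =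
     (\<integral>\<^sup>+ t. (\<integral>\<^sup>+ s. (\<integral>\<^sup>+ y. (\<integral>\<^sup>+ x.
        green x y * indicator (cball (X i s \<omega>) 1) x * indicator (cball (X j t \<omega>) 1) y
        \<partial>lborel) \<partial>lborel) * indicator {L/2..L} s \<partial>lborel) * indicator {L/2..L} t \<partial>lborel)"

end

theory Submission
  imports Defs
begin


lemma hk_meas: "(\<lambda>p. heat_kernel (fst p) (snd p::real^'d)) \<in> borel_measurable (borel \<Otimes>\<^sub>M borel)"
  unfolding heat_kernel_def by measurable
lemma hk_meas'[measurable (raw)]: "f \<in> borel_measurable M \<Longrightarrow> g \<in> borel_measurable M \<Longrightarrow> (\<lambda>x. heat_kernel (f x) (g x::real^'d)) \<in> borel_measurable M"
  using measurable_compose[OF measurable_Pair hk_meas] by simp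

lemma green_meas: "(\<lambda>p. green (fst p) (snd p::real^'d)) \<in> borel_measurable (borel \<Otimes>\<^sub>M borel)"
  unfolding green_def by measurable
lemma green_meas'[measurable (raw)]: "f \<in> borel_measurable M \<Longrightarrow> g \<in> borel_measurable M \<Longrightarrow> (\<lambda>x. green (f x) (g x::real^'d)) \<in> borel_measurable M"
  using measurable_compose[OF measurable_Pair green_meas] by simp

lemma ind_cball_eq: "(indicator (cball a r) b :: 'b::{zero_neq_one}) = (if dist a b \<le> r then 1 else 0)"
  by (simp add: indicator_def)

lemma ind_cball_meas[measurable (raw)]:
  fixes f g :: "'m \<Rightarrow> 'a::euclidean_space"
  shows "f \<in> borel_measurable M \<Longrightarrow> g \<in> borel_measurable M \<Longrightarrow> (\<lambda>x. indicator (cball (f x) r) (g x) :: ennreal) \<in> borel_measurable M"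
  unfolding ind_cball_eq by measurable

lemma lborel_shift:
  fixes f :: "'a::euclidean_space \<Rightarrow> ennreal"
  assumes [measurable]: "f \<in> borel_measurable borel"
  shows "(\<integral>\<^sup>+x. f (c + x) \<partial>lborel) = (\<integral>\<^sup>+x. f x \<partial>lborel)"
proof -
  have "(\<integral>\<^sup>+x. f x \<partial>lborel) = (\<integral>\<^sup>+x. f x \<partial>(distr lborel borel ((+) c)))"
    by (simp add: lborel_distr_plus)
  also have "\<dots> = (\<integral>\<^sup>+x. f (c + x) \<partial>lborel)"
    by (subst nn_integral_distr) auto
  finally show ?thesis by simp
qed

lemma lborel_reflect:
  fixes f :: "'a::euclidean_space \<Rightarrow> ennreal"
  assumes [measurable]: "f \<in> borel_measurable borel"
  shows "(\<integral>\<^sup>+x. f (- x) \<partial>lborel) = (\<integral>\<^sup>+x. f x \<partial>lborel)"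
proof -
  have e: "lborel = distr lborel borel (uminus::'a\<Rightarrow>'a)"
    using lborel_affine[of "-1::real" "0::'a"] by (simp add: density_1)
  have "(\<integral>\<^sup>+x. f x \<partial>lborel) = (\<integral>\<^sup>+x. f x \<partial>(distr lborel borel (uminus::'a\<Rightarrow>'a)))"
    by (subst e[symmetric]) simp
  also have "\<dots> = (\<integral>\<^sup>+x. f (- x) \<partial>lborel)"
    by (subst nn_integral_distr) auto
  finally show ?thesis by simp
qed

lemma cball_vol: "emeasure lborel (cball (c::'a::euclidean_space) 1) = ennreal (unit_ball_vol (DIM('a)))"
  by (subst emeasure_cball) auto

lemma swap_lborel:
  fixes f :: "'a::euclidean_space \<Rightarrow> 'b::euclidean_space \<Rightarrow> ennreal"
  assumes "(\<lambda>p. f (fst p) (snd p)) \<in> borel_measurable (borel \<Otimes>\<^sub>M borel)"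
  shows "(\<integral>\<^sup>+x. (\<integral>\<^sup>+y. f x y \<partial>lborel) \<partial>lborel) = (\<integral>\<^sup>+y. (\<integral>\<^sup>+x. f x y \<partial>lborel) \<partial>lborel)"
proof -
  have ps: "pair_sigma_finite (lborel::'a measure) (lborel::'b measure)"
    by (simp add: lborel.sigma_finite_measure_axioms pair_sigma_finite.intro)
  show ?thesis
    by (rule pair_sigma_finite.Fubini'[OF ps, symmetric]) (use assms in \<open>simp add: case_prod_beta'\<close>)
qed

definition Gf :: "real^'d \<Rightarrow> real^'d \<Rightarrow> ennreal" where
  "Gf a b = (\<integral>\<^sup>+y. (\<integral>\<^sup>+x. green x y * indicator (cball a 1) x * indicator (cball b 1) y \<partial>lborel) \<partial>lborel)"

lemma Gf_meas: "(\<lambda>p. Gf (fst p) (snd p)) \<in> borel_measurable (borel \<Otimes>\<^sub>M borel)"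
  unfolding Gf_def by measurable
lemma Gf_meas'[measurable (raw)]: "f \<in> borel_measurable M \<Longrightarrow> g \<in> borel_measurable M \<Longrightarrow> (\<lambda>x. Gf (f x) (g x)) \<in> borel_measurable M"
  using measurable_compose[OF measurable_Pair Gf_meas] by simp

lemma hk_le: "t > 0 \<Longrightarrow> heat_kernel t (x::real^'d) \<le> (2*pi*t) powr (- real CARD('d) / 2)"
  unfolding heat_kernel_def by (intro mult_left_le) auto

lemma hk_nonneg: "heat_kernel t x \<ge> 0"
  unfolding heat_kernel_def by simp

lemma hk_int_shift:
  assumes hk1: "(\<integral>\<^sup>+x. ennreal (heat_kernel t (x::real^'d)) \<partial>lborel) = 1"
  shows "(\<integral>\<^sup>+y. ennreal (heat_kernel t (x - y::real^'d)) \<partial>lborel) = 1"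
proof -
  have "(\<integral>\<^sup>+y. ennreal (heat_kernel t (x - y::real^'d)) \<partial>lborel) = (\<integral>\<^sup>+y. ennreal (heat_kernel t (x + y::real^'d)) \<partial>lborel)"
    using lborel_reflect[of "\<lambda>y. ennreal (heat_kernel t (x + y::real^'d))"] by simp
  also have "\<dots> = 1" using lborel_shift[of "\<lambda>y. ennreal (heat_kernel t (y::real^'d))" x] hk1 by simp
  finally show ?thesis .
qed




lemma core:
  fixes q :: "real^'d \<Rightarrow> real" and B0 :: real
  assumes qm[measurable]: "q \<in> borel_measurable borel" and q0: "\<And>w. 0 \<le> q w"
    and q1: "(\<integral>\<^sup>+w. ennreal (q w) \<partial>lborel) = 1" and qB: "\<And>w. q w \<le> B0"
    and hk1: "\<And>t. t > 0 \<Longrightarrow> (\<integral>\<^sup>+x. ennreal (heat_kernel t (x::real^'d)) \<partial>lborel) = 1"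
  shows "(\<integral>\<^sup>+w. ennreal (q w) * Gf 0 w \<partial>lborel) \<le> ennreal (unit_ball_vol (real CARD('d))) *
     (\<integral>\<^sup>+t. indicator {0<..} t * ennreal (min 1 (min (B0 * unit_ball_vol (real CARD('d)))
        (unit_ball_vol (real CARD('d)) * (2*pi*t) powr (- real CARD('d)/2)))) \<partial>lborel)"
proof -
  define Vb where "Vb = unit_ball_vol (real CARD('d))"
  have Vb0: "Vb \<ge> 0" unfolding Vb_def by simp
  have cv: "emeasure lborel (cball (c::real^'d) 1) = ennreal Vb" for c
    using cball_vol[of c] by (simp add: Vb_def)
  have B00: "B0 \<ge> 0" using q0[of 0] qB[of 0] by linarith
  define \<psi> where "\<psi> y = (\<integral>\<^sup>+w. ennreal (q w) * indicator (cball w 1) y \<partial>lborel)" for y :: "real^'d"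
  have \<psi>m[measurable]: "\<psi> \<in> borel_measurable borel"
    unfolding \<psi>_def by measurable
  have \<psi>1: "\<psi> y \<le> 1" for y
  proof -
    have "\<psi> y \<le> (\<integral>\<^sup>+w. ennreal (q w) \<partial>lborel)"
      unfolding \<psi>_def by (intro nn_integral_mono) (auto simp: indicator_def)
    then show ?thesis using q1 by simp
  qed
  have \<psi>B: "\<psi> y \<le> ennreal (B0 * Vb)" for y
  proof -
    have "\<psi> y \<le> (\<integral>\<^sup>+w. ennreal B0 * indicator (cball y 1) w \<partial>lborel)"
      unfolding \<psi>_def by (intro nn_integral_mono) (auto simp: indicator_def dist_commute qB intro: ennreal_leI)
    also have "\<dots> = ennreal B0 * ennreal Vb"
      by (simp add: nn_integral_cmult_indicator cv)
    finally show ?thesis using B00 Vb0 by (simp add: ennreal_mult)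
  qed
  have \<psi>int: "(\<integral>\<^sup>+y. \<psi> y \<partial>lborel) = ennreal Vb"
  proof -
    have "(\<integral>\<^sup>+y. \<psi> y \<partial>lborel) = (\<integral>\<^sup>+w. (\<integral>\<^sup>+y. ennreal (q w) * indicator (cball w 1) y \<partial>lborel) \<partial>lborel)"
      unfolding \<psi>_def by (rule swap_lborel[symmetric]) measurable
    also have "\<dots> = (\<integral>\<^sup>+w. ennreal (q w) * ennreal Vb \<partial>lborel)"
      by (intro nn_integral_cong) (simp add: nn_integral_cmult_indicator cv)
    also have "\<dots> = ennreal Vb"
      by (simp add: nn_integral_multc q1)
    finally show ?thesis .
  qed
  define kb where "kb t = min 1 (min (B0 * Vb) (Vb * (2*pi*t) powr (- real CARD('d)/2)))" for t :: real
  have step2: "(\<integral>\<^sup>+y. ennreal (heat_kernel t (x - y)) * \<psi> y \<partial>lborel) \<le> ennreal (kb t)" if t0: "t > 0" for t x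
  proof -
    have A: "(\<integral>\<^sup>+y. ennreal (heat_kernel t (x - y)) * \<psi> y \<partial>lborel) \<le> ennreal (min 1 (B0 * Vb))"
    proof -
      have "(\<integral>\<^sup>+y. ennreal (heat_kernel t (x - y)) * \<psi> y \<partial>lborel) \<le>
            (\<integral>\<^sup>+y. ennreal (heat_kernel t (x - y)) * ennreal (min 1 (B0 * Vb)) \<partial>lborel)"
        using \<psi>1 \<psi>B by (intro nn_integral_mono mult_left_mono) (auto simp: min_def)
      also have "\<dots> = ennreal (min 1 (B0 * Vb))"
        by (simp add: nn_integral_multc hk_int_shift[OF hk1[OF t0]])
      finally show ?thesis .
    qed
    have B: "(\<integral>\<^sup>+y. ennreal (heat_kernel t (x - y)) * \<psi> y \<partial>lborel) \<le> ennreal (Vb * (2*pi*t) powr (- real CARD('d)/2))"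
    proof -
      have "(\<integral>\<^sup>+y. ennreal (heat_kernel t (x - y)) * \<psi> y \<partial>lborel) \<le>
            (\<integral>\<^sup>+y. ennreal ((2*pi*t) powr (- real CARD('d)/2)) * \<psi> y \<partial>lborel)"
        using hk_le[OF t0] by (intro nn_integral_mono mult_right_mono) auto
      also have "\<dots> = ennreal ((2*pi*t) powr (- real CARD('d)/2)) * ennreal Vb"
        by (simp add: nn_integral_cmult \<psi>int)
      finally show ?thesis using Vb0 by (simp add: ennreal_mult mult.commute)
    qed
    show ?thesis unfolding kb_def using A B by (auto simp: min_def split: if_splits)
  qed
  have green_y: "(\<integral>\<^sup>+y. green x y * \<psi> y \<partial>lborel) \<le> (\<integral>\<^sup>+t. indicator {0<..} t * ennreal (kb t) \<partial>lborel)" for x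
  proof -
    have "(\<integral>\<^sup>+y. green x y * \<psi> y \<partial>lborel) =
       (\<integral>\<^sup>+y. (\<integral>\<^sup>+t. indicator {0<..} t * (ennreal (heat_kernel t (x - y)) * \<psi> y) \<partial>lborel) \<partial>lborel)"
      unfolding green_def
      apply (intro nn_integral_cong)
      apply (subst nn_integral_multc[symmetric])
      apply measurable
      apply (simp add: mult_ac)
      done
    also have "\<dots> = (\<integral>\<^sup>+t. (\<integral>\<^sup>+y. indicator {0<..} t * (ennreal (heat_kernel t (x - y)) * \<psi> y) \<partial>lborel) \<partial>lborel)"
      by (rule swap_lborel) measurable
    also have "\<dots> = (\<integral>\<^sup>+t. indicator {0<..} t * (\<integral>\<^sup>+y. ennreal (heat_kernel t (x - y)) * \<psi> y \<partial>lborel) \<partial>lborel)"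
      by (intro nn_integral_cong) (simp add: nn_integral_cmult)
    also have "\<dots> \<le> (\<integral>\<^sup>+t. indicator {0<..} t * ennreal (kb t) \<partial>lborel)"
      using step2 by (intro nn_integral_mono) (auto simp: indicator_def)
    finally show ?thesis .
  qed
  have "(\<integral>\<^sup>+w. ennreal (q w) * Gf 0 w \<partial>lborel) =
     (\<integral>\<^sup>+w. (\<integral>\<^sup>+y. (\<integral>\<^sup>+x. ennreal (q w) * (green x y * indicator (cball 0 1) x * indicator (cball w 1) y) \<partial>lborel) \<partial>lborel) \<partial>lborel)"
    unfolding Gf_def by (intro nn_integral_cong) (simp add: nn_integral_cmult[symmetric])
  also have "\<dots> = (\<integral>\<^sup>+y. (\<integral>\<^sup>+w. (\<integral>\<^sup>+x. ennreal (q w) * (green x y * indicator (cball 0 1) x * indicator (cball w 1) y) \<partial>lborel) \<partial>lborel) \<partial>lborel)"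
    by (rule swap_lborel) measurable
  also have "\<dots> = (\<integral>\<^sup>+y. (\<integral>\<^sup>+x. (\<integral>\<^sup>+w. ennreal (q w) * (green x y * indicator (cball 0 1) x * indicator (cball w 1) y) \<partial>lborel) \<partial>lborel) \<partial>lborel)"
    by (intro nn_integral_cong swap_lborel) measurable
  also have "\<dots> = (\<integral>\<^sup>+y. (\<integral>\<^sup>+x. indicator (cball 0 1) x * (green x y * \<psi> y) \<partial>lborel) \<partial>lborel)"
  proof (intro nn_integral_cong)
    fix y x :: "real^'d"
    show "(\<integral>\<^sup>+w. ennreal (q w) * (green x y * indicator (cball 0 1) x * indicator (cball w 1) y) \<partial>lborel) =
          indicator (cball 0 1) x * (green x y * \<psi> y)"
    proof -
      have "(\<integral>\<^sup>+w. ennreal (q w) * (green x y * indicator (cball 0 1) x * indicator (cball w 1) y) \<partial>lborel)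
         = (\<integral>\<^sup>+w. (green x y * indicator (cball 0 1) x) * (ennreal (q w) * indicator (cball w 1) y) \<partial>lborel)"
        by (intro nn_integral_cong) (simp add: mult_ac)
      also have "\<dots> = (green x y * indicator (cball 0 1) x) * \<psi> y"
        unfolding \<psi>_def by (rule nn_integral_cmult) measurable
      finally show ?thesis by (simp add: mult_ac)
    qed
  qed
  also have "\<dots> = (\<integral>\<^sup>+x. (\<integral>\<^sup>+y. indicator (cball 0 1) x * (green x y * \<psi> y) \<partial>lborel) \<partial>lborel)"
    by (rule swap_lborel[symmetric]) measurable
  also have "\<dots> = (\<integral>\<^sup>+x. indicator (cball 0 1) x * (\<integral>\<^sup>+y. green x y * \<psi> y \<partial>lborel) \<partial>lborel)"
    by (intro nn_integral_cong) (simp add: nn_integral_cmult)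
  also have "\<dots> \<le> (\<integral>\<^sup>+x. indicator (cball 0 1) (x::real^'d) * (\<integral>\<^sup>+t. indicator {0<..} t * ennreal (kb t) \<partial>lborel) \<partial>lborel)"
    by (intro nn_integral_mono mult_left_mono green_y) auto
  also have "\<dots> = ennreal Vb * (\<integral>\<^sup>+t. indicator {0<..} t * ennreal (kb t) \<partial>lborel)"
    by (simp add: nn_integral_multc cv mult.commute)
  finally show ?thesis unfolding kb_def Vb_def .
qed




lemma inv_sq_int:
  assumes a: "a > 0"
  shows "(\<integral>\<^sup>+t. ennreal (indicator {a..} t * (1 / t^2)) \<partial>lborel) = ennreal (1 / a)"
proof -
  have "((\<lambda>x. 1 / x ^ 2) has_integral 1 / (real (2 - 1) * a ^ (2 - 1))) {a..}"
    by (rule has_integral_inverse_power_to_inf) (use a in auto)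
  then have h: "((\<lambda>x. 1 / x ^ 2) has_integral 1 / a) {a..}" by simp
  have "integral\<^sup>N lborel (\<lambda>x. indicator {a..} x * (1 / x^2)) = 1 / a"
    by (rule nn_integral_has_integral_lebesgue[OF _ h]) auto
  then show ?thesis by simp
qed


lemma K_unif:
  assumes d: "CARD('d) \<ge> 4" and Vb0: "Vb \<ge> 0"
  shows "(\<integral>\<^sup>+t. indicator {0<..} t * ennreal (min 1 (min a (Vb * (2*pi*t) powr (- real CARD('d)/2)))) \<partial>lborel)
     \<le> ennreal (1 + Vb * (2*pi) powr (- real CARD('d)/2))"
proof -
  define c0 where "c0 = Vb * (2*pi) powr (- real CARD('d)/2)"
  have c00: "c0 \<ge> 0" unfolding c0_def using Vb0 by simp
  have pt: "indicator {0<..} t * ennreal (min 1 (min a (Vb * (2*pi*t) powr (- real CARD('d)/2))))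
     \<le> indicator {0<..1} t + ennreal c0 * ennreal (indicator {1..} t * (1 / t^2))" for t :: real
  proof (cases "t \<le> 1")
    case True
    have "indicator {0<..} t * ennreal (min 1 (min a (Vb * (2*pi*t) powr (- real CARD('d)/2)))) \<le> indicator {0<..1} t"
    proof (cases "t > 0")
      case True2: True
      have "ennreal (min 1 (min a (Vb * (2*pi*t) powr (- real CARD('d)/2)))) \<le> ennreal 1"
        by (rule ennreal_leI) simp
      then show ?thesis using True True2 by simp
    qed simp
    then show ?thesis by (rule add_increasing2[rotated]) simp
  next
    case False
    then have t1: "t > 1" by simp
    have e1: "Vb * (2*pi*t) powr (- real CARD('d)/2) = c0 * t powr (- real CARD('d)/2)"
      unfolding c0_def using t1 by (simp add: powr_mult)
    have p1: "t powr (- real CARD('d)/2) \<le> t powr (-2)"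
      by (rule powr_mono) (use t1 d in auto)
    have p2: "t powr (-2) = 1 / t^2"
      using t1 by (simp add: powr_minus_divide powr_numeral)
    have "c0 * t powr (- real CARD('d)/2) \<le> c0 * (1 / t^2)"
      using mult_left_mono[OF p1 c00] p2 by simp
    then have "min 1 (min a (Vb * (2*pi*t) powr (- real CARD('d)/2))) \<le> c0 * (1 / t^2)"
      using e1 by linarith
    then have "ennreal (min 1 (min a (Vb * (2*pi*t) powr (- real CARD('d)/2)))) \<le> ennreal (c0 * (1 / t^2))"
      by (rule ennreal_leI)
    moreover have "ennreal (c0 * (1 / t^2)) = ennreal c0 * ennreal (1 / t^2)"
      using c00 by (intro ennreal_mult) auto
    ultimately show ?thesis using t1 by simp
  qed
  have "(\<integral>\<^sup>+t. indicator {0<..} t * ennreal (min 1 (min a (Vb * (2*pi*t) powr (- real CARD('d)/2)))) \<partial>lborel)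
      \<le> (\<integral>\<^sup>+t. indicator {0<..1} (t::real) + ennreal c0 * ennreal (indicator {1..} t * (1 / t^2)) \<partial>lborel)"
    by (intro nn_integral_mono pt)
  also have "\<dots> = (\<integral>\<^sup>+t. indicator {0<..1} (t::real) \<partial>lborel) + (\<integral>\<^sup>+t. ennreal c0 * ennreal (indicator {1..} (t::real) * (1 / t^2)) \<partial>lborel)"
    by (rule nn_integral_add; measurable)
  also have "(\<integral>\<^sup>+t. indicator {0<..1} (t::real) \<partial>lborel) + (\<integral>\<^sup>+t. ennreal c0 * ennreal (indicator {1..} (t::real) * (1 / t^2)) \<partial>lborel) = 1 + ennreal c0 * ennreal 1"
  proof -
    have "(\<integral>\<^sup>+t. ennreal c0 * ennreal (indicator {1..} (t::real) * (1 / t^2)) \<partial>lborel) = ennreal c0 * (\<integral>\<^sup>+t. ennreal (indicator {1..} (t::real) * (1 / t^2)) \<partial>lborel)"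
      by (rule nn_integral_cmult) measurable
    then show ?thesis using inv_sq_int[of 1] by simp
  qed
  also have "1 + ennreal c0 * ennreal 1 = ennreal (1 + c0)"
    using c00 by (simp add: ennreal_plus)
  finally show ?thesis unfolding c0_def .
qed

lemma K_sigma:
  assumes d: "CARD('d) \<ge> 4" and Vb0: "Vb \<ge> 0" and s: "\<sigma> > 0"
  shows "(\<integral>\<^sup>+t. indicator {0<..} t * ennreal (min 1 (min ((2*pi*\<sigma>) powr (- real CARD('d)/2) * Vb) (Vb * (2*pi*t) powr (- real CARD('d)/2)))) \<partial>lborel)
     \<le> ennreal (2 * (Vb * (2*pi) powr (- real CARD('d)/2)) * \<sigma> powr (1 - real CARD('d)/2))"
proof -
  define c0 where "c0 = Vb * (2*pi) powr (- real CARD('d)/2)"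
  define e where "e = - real CARD('d)/2"
  have c00: "c0 \<ge> 0" unfolding c0_def using Vb0 by simp
  have e2: "e \<le> -2" unfolding e_def using d by simp
  have sv: "(2*pi*\<sigma>) powr e * Vb = c0 * \<sigma> powr e" unfolding c0_def e_def using s by (simp add: powr_mult)
  have pt: "indicator {0<..} t * ennreal (min 1 (min ((2*pi*\<sigma>) powr e * Vb) (Vb * (2*pi*t) powr e)))
     \<le> ennreal (c0 * \<sigma> powr e) * indicator {0<..\<sigma>} t + ennreal (c0 * \<sigma> powr (e + 2)) * ennreal (indicator {\<sigma>..} t * (1 / t^2))" for t :: real
  proof (cases "t \<le> \<sigma>")
    case True
    have "indicator {0<..} t * ennreal (min 1 (min ((2*pi*\<sigma>) powr e * Vb) (Vb * (2*pi*t) powr e))) \<le> ennreal (c0 * \<sigma> powr e) * indicator {0<..\<sigma>} t"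
    proof (cases "t > 0")
      case True2: True
      have "ennreal (min 1 (min ((2*pi*\<sigma>) powr e * Vb) (Vb * (2*pi*t) powr e))) \<le> ennreal (c0 * \<sigma> powr e)"
        by (rule ennreal_leI) (simp add: sv)
      then show ?thesis using True True2 by simp
    qed simp
    then show ?thesis by (rule add_increasing2[rotated]) simp
  next
    case False
    then have t1: "t > \<sigma>" by simp
    have e1: "Vb * (2*pi*t) powr e = c0 * t powr e"
      unfolding c0_def e_def using t1 s by (simp add: powr_mult)
    have e3: "t powr e = t powr (e + 2) * t powr (-2)" using t1 s by (simp add: powr_add[symmetric])
    have p1: "t powr (e + 2) \<le> \<sigma> powr (e + 2)"
      by (rule powr_mono2') (use t1 s e2 in auto)
    have p2: "t powr (-2) = 1 / t^2" using t1 s by (simp add: powr_minus_divide powr_numeral)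
    have "c0 * t powr e \<le> c0 * \<sigma> powr (e + 2) * (1 / t^2)"
      using mult_left_mono[OF mult_right_mono[OF p1, of "t powr (-2)"] c00] e3 p2 by (simp add: mult.assoc)
    then have "min 1 (min ((2*pi*\<sigma>) powr e * Vb) (Vb * (2*pi*t) powr e)) \<le> c0 * \<sigma> powr (e + 2) * (1 / t^2)"
      using e1 by linarith
    then have "ennreal (min 1 (min ((2*pi*\<sigma>) powr e * Vb) (Vb * (2*pi*t) powr e))) \<le> ennreal (c0 * \<sigma> powr (e + 2) * (1 / t^2))"
      by (rule ennreal_leI)
    moreover have "ennreal (c0 * \<sigma> powr (e + 2) * (1 / t^2)) = ennreal (c0 * \<sigma> powr (e + 2)) * ennreal (1 / t^2)"
      using c00 by (intro ennreal_mult) auto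
    ultimately show ?thesis using t1 s by simp
  qed
  have "(\<integral>\<^sup>+t. indicator {0<..} t * ennreal (min 1 (min ((2*pi*\<sigma>) powr e * Vb) (Vb * (2*pi*t) powr e))) \<partial>lborel)
      \<le> (\<integral>\<^sup>+t. ennreal (c0 * \<sigma> powr e) * indicator {0<..\<sigma>} (t::real) + ennreal (c0 * \<sigma> powr (e + 2)) * ennreal (indicator {\<sigma>..} t * (1 / t^2)) \<partial>lborel)"
    by (intro nn_integral_mono pt)
  also have "\<dots> = (\<integral>\<^sup>+t. ennreal (c0 * \<sigma> powr e) * indicator {0<..\<sigma>} (t::real) \<partial>lborel) + (\<integral>\<^sup>+t. ennreal (c0 * \<sigma> powr (e + 2)) * ennreal (indicator {\<sigma>..} (t::real) * (1 / t^2)) \<partial>lborel)"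
    by (rule nn_integral_add; measurable)
  also have "(\<integral>\<^sup>+t. ennreal (c0 * \<sigma> powr e) * indicator {0<..\<sigma>} (t::real) \<partial>lborel) = ennreal (c0 * \<sigma> powr e) * ennreal \<sigma>"
    using s by (simp add: nn_integral_cmult_indicator)
  also have "(\<integral>\<^sup>+t. ennreal (c0 * \<sigma> powr (e + 2)) * ennreal (indicator {\<sigma>..} (t::real) * (1 / t^2)) \<partial>lborel) = ennreal (c0 * \<sigma> powr (e + 2)) * ennreal (1 / \<sigma>)"
  proof -
    have "(\<integral>\<^sup>+t. ennreal (c0 * \<sigma> powr (e + 2)) * ennreal (indicator {\<sigma>..} (t::real) * (1 / t^2)) \<partial>lborel) = ennreal (c0 * \<sigma> powr (e + 2)) * (\<integral>\<^sup>+t. ennreal (indicator {\<sigma>..} (t::real) * (1 / t^2)) \<partial>lborel)"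
      by (rule nn_integral_cmult) measurable
    then show ?thesis using inv_sq_int[OF s] by simp
  qed
  also have "ennreal (c0 * \<sigma> powr e) * ennreal \<sigma> + ennreal (c0 * \<sigma> powr (e + 2)) * ennreal (1 / \<sigma>) = ennreal (2 * c0 * \<sigma> powr (e + 1))"
  proof -
    have a1: "c0 * \<sigma> powr e * \<sigma> = c0 * \<sigma> powr (e+1)" using s by (simp add: powr_add)
    have a2: "c0 * \<sigma> powr (e + 2) * (1 / \<sigma>) = c0 * \<sigma> powr (e+1)"
      using s by (simp add: powr_add power2_eq_square)
    have "ennreal (c0 * \<sigma> powr e) * ennreal \<sigma> + ennreal (c0 * \<sigma> powr (e + 2)) * ennreal (1 / \<sigma>)
       = ennreal (c0 * \<sigma> powr e * \<sigma>) + ennreal (c0 * \<sigma> powr (e + 2) * (1 / \<sigma>))"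
    proof -
      have "ennreal (c0 * \<sigma> powr e) * ennreal \<sigma> = ennreal (c0 * \<sigma> powr e * \<sigma>)"
        by (rule ennreal_mult[symmetric]) (use c00 s in auto)
      moreover have "ennreal (c0 * \<sigma> powr (e + 2)) * ennreal (1 / \<sigma>) = ennreal (c0 * \<sigma> powr (e + 2) * (1 / \<sigma>))"
        by (rule ennreal_mult[symmetric]) (use c00 s in auto)
      ultimately show ?thesis by simp
    qed
    also have "\<dots> = ennreal (2 * c0 * \<sigma> powr (e + 1))"
      unfolding a1 a2 using c00 by (simp add: ennreal_plus[symmetric] del: ennreal_plus)
    finally show ?thesis .
  qed
  finally show ?thesis unfolding c0_def e_def by (simp add: algebra_simps)
qed




lemma floor_approx: "(\<lambda>n. real_of_int \<lfloor>x * real (Suc n)\<rfloor> / real (Suc n)) \<longlonglongrightarrow> x"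
proof (rule tendsto_sandwich[of "\<lambda>n. x - 1 / real (Suc n)" _ _ "\<lambda>n. x"])
  show "\<forall>\<^sub>F n in sequentially. x - 1 / real (Suc n) \<le> real_of_int \<lfloor>x * real (Suc n)\<rfloor> / real (Suc n)"
  proof (intro always_eventually allI)
    fix n
    have h: "x * real (Suc n) - 1 \<le> real_of_int \<lfloor>x * real (Suc n)\<rfloor>" by linarith
    have "(x * real (Suc n) - 1) / real (Suc n) \<le> real_of_int \<lfloor>x * real (Suc n)\<rfloor> / real (Suc n)"
      by (rule divide_right_mono) (use h in auto)
    moreover have "(x * real (Suc n) - 1) / real (Suc n) = x - 1 / real (Suc n)"
      by (simp add: diff_divide_distrib)
    ultimately show "x - 1 / real (Suc n) \<le> real_of_int \<lfloor>x * real (Suc n)\<rfloor> / real (Suc n)"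
      by simp
  qed
  show "\<forall>\<^sub>F n in sequentially. real_of_int \<lfloor>x * real (Suc n)\<rfloor> / real (Suc n) \<le> x"
  proof (intro always_eventually allI)
    fix n
    have h: "real_of_int \<lfloor>x * real (Suc n)\<rfloor> \<le> x * real (Suc n)" by linarith
    have "real_of_int \<lfloor>x * real (Suc n)\<rfloor> / real (Suc n) \<le> x * real (Suc n) / real (Suc n)"
      by (rule divide_right_mono) (use h in auto)
    then show "real_of_int \<lfloor>x * real (Suc n)\<rfloor> / real (Suc n) \<le> x"
      by simp
  qed
  have "(\<lambda>n. 1 / real (Suc n)) \<longlonglongrightarrow> 0" by (rule LIMSEQ_Suc[OF lim_const_over_n]) 
  then show "(\<lambda>n. x - 1 / real (Suc n)) \<longlonglongrightarrow> x"
    using tendsto_diff[OF tendsto_const[of x]] by fastforce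
qed simp

lemma BM_joint_meas:
  fixes Y :: "real \<Rightarrow> 'a \<Rightarrow> real^'d"
  assumes bm: "brownian_motion P Y z"
  shows "(\<lambda>p. Y (max 0 (fst p)) (snd p)) \<in> borel_measurable (borel \<Otimes>\<^sub>M P)"
proof -
  have ym: "Y t \<in> borel_measurable P" for t using bm unfolding brownian_motion_def by auto
  have cont: "\<omega> \<in> space P \<Longrightarrow> continuous_on {0..} (\<lambda>t. Y t \<omega>)" for \<omega>
    using bm unfolding brownian_motion_def by auto
  show ?thesis
proof (rule borel_measurable_LIMSEQ_metric)
  fix n :: nat
  show "(\<lambda>p. Y (max 0 (real_of_int \<lfloor>fst p * real (Suc n)\<rfloor> / real (Suc n))) (snd p)) \<in> borel_measurable (borel \<Otimes>\<^sub>M P)"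
  proof (rule measurable_compose_countable[where g="\<lambda>p. \<lfloor>fst p * real (Suc n)\<rfloor>"])
    fix k :: int
    show "(\<lambda>p. Y (max 0 (real_of_int k / real (Suc n))) (snd p)) \<in> borel_measurable (borel \<Otimes>\<^sub>M P)"
      using measurable_compose[OF measurable_snd ym] by simp
  next
    show "(\<lambda>p. \<lfloor>fst p * real (Suc n)\<rfloor>) \<in> measurable (borel \<Otimes>\<^sub>M P) (count_space UNIV)"
      by measurable
  qed
next
  fix p :: "real \<times> 'a" assume p: "p \<in> space (borel \<Otimes>\<^sub>M P)"
  then have \<omega>: "snd p \<in> space P" by (auto simp: space_pair_measure)
  have "(\<lambda>n. max 0 (real_of_int \<lfloor>fst p * real (Suc n)\<rfloor> / real (Suc n))) \<longlonglongrightarrow> max 0 (fst p)"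
    by (intro tendsto_max tendsto_const floor_approx)
  then show "(\<lambda>n. Y (max 0 (real_of_int \<lfloor>fst p * real (Suc n)\<rfloor> / real (Suc n))) (snd p)) \<longlonglongrightarrow> Y (max 0 (fst p)) (snd p)"
    by (rule continuous_on_tendsto_compose[OF cont[OF \<omega>]]) auto
qed
qed

lemma Gf_shift: "Gf a b = Gf 0 (b - a)"
proof -
  have inner: "(\<integral>\<^sup>+x. green x y * indicator (cball a 1) x * indicator (cball b 1) y \<partial>lborel)
     = (\<integral>\<^sup>+x. green (a + x) y * indicator (cball 0 1) x * indicator (cball b 1) y \<partial>lborel)" for y
    by (subst lborel_shift[symmetric, where c=a]) (auto simp: dist_norm indicator_def)
  have "Gf a b = (\<integral>\<^sup>+y. (\<integral>\<^sup>+x. green (a + x) y * indicator (cball 0 1) x * indicator (cball b 1) y \<partial>lborel) \<partial>lborel)"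
    unfolding Gf_def by (simp add: inner)
  also have "\<dots> = (\<integral>\<^sup>+y. (\<integral>\<^sup>+x. green (a + x) (a + y) * indicator (cball 0 1) x * indicator (cball b 1) (a + y) \<partial>lborel) \<partial>lborel)"
    by (subst lborel_shift[symmetric, where c=a]) auto
  also have "\<dots> = Gf 0 (b - a)"
    unfolding Gf_def green_def by (simp add: dist_norm indicator_def algebra_simps)
  finally show ?thesis .
qed




definition cV :: "'d itself \<Rightarrow> real" where "cV T = unit_ball_vol (real CARD('d))"
definition cc0 :: "'d itself \<Rightarrow> real" where "cc0 T = cV T * (2*pi) powr (- real CARD('d)/2)"
definition cA :: "'d itself \<Rightarrow> real" where "cA T = cV T * (1 + cc0 T)"
definition cB :: "'d itself \<Rightarrow> real" where "cB T = cV T * (2 * cc0 T)"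

lemma cV_nonneg: "cV T \<ge> 0" unfolding cV_def by simp
lemma cc0_nonneg: "cc0 T \<ge> 0" unfolding cc0_def by (intro mult_nonneg_nonneg cV_nonneg) simp
lemma cA_nonneg: "cA T \<ge> 0" unfolding cA_def by (intro mult_nonneg_nonneg add_nonneg_nonneg cV_nonneg cc0_nonneg) simp
lemma cB_nonneg: "cB T \<ge> 0" unfolding cB_def by (intro mult_nonneg_nonneg cV_nonneg cc0_nonneg) simp

lemma hk_neg: "heat_kernel t (- x) = heat_kernel t x"
  unfolding heat_kernel_def by simp

lemma lborel_csub:
  fixes f :: "'a::euclidean_space \<Rightarrow> ennreal"
  assumes [measurable]: "f \<in> borel_measurable borel"
  shows "(\<integral>\<^sup>+x. f (c - x) \<partial>lborel) = (\<integral>\<^sup>+x. f x \<partial>lborel)"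
proof -
  have "(\<integral>\<^sup>+x. f (c - x) \<partial>lborel) = (\<integral>\<^sup>+x. f (c + (- x)) \<partial>lborel)" by simp
  also have "\<dots> = (\<integral>\<^sup>+x. f (c + x) \<partial>lborel)"
    by (rule lborel_reflect[of "\<lambda>x. f (c + x)"]) measurable
  also have "\<dots> = (\<integral>\<^sup>+x. f x \<partial>lborel)" by (rule lborel_shift) fact
  finally show ?thesis .
qed

lemma Ebound:
  assumes d: "CARD('d) \<ge> 5"
    and hk1: "\<And>t. t > 0 \<Longrightarrow> (\<integral>\<^sup>+x. ennreal (heat_kernel t (x::real^'d)) \<partial>lborel) = 1"
    and \<sigma>: "\<sigma> > 0"
  shows "(\<integral>\<^sup>+w. ennreal (heat_kernel \<sigma> (c - w)) * Gf 0 (w::real^'d) \<partial>lborel)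
     \<le> ennreal (min (cA TYPE('d)) (cB TYPE('d) * \<sigma> powr (1 - real CARD('d)/2)))"
proof -
  define Vb where "Vb = unit_ball_vol (real CARD('d))"
  have Vb0: "Vb \<ge> 0" unfolding Vb_def by simp
  define B0 where "B0 = (2*pi*\<sigma>) powr (- real CARD('d)/2)"
  have C: "(\<integral>\<^sup>+w. ennreal (heat_kernel \<sigma> (c - w)) * Gf 0 (w::real^'d) \<partial>lborel) \<le> ennreal Vb *
     (\<integral>\<^sup>+t. indicator {0<..} t * ennreal (min 1 (min (B0 * Vb)
        (Vb * (2*pi*t) powr (- real CARD('d)/2)))) \<partial>lborel)"
    unfolding Vb_def
  proof (rule core[of "\<lambda>w. heat_kernel \<sigma> (c - w)" B0])
    show "(\<lambda>w. heat_kernel \<sigma> (c - w)) \<in> borel_measurable borel" by measurable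
    show "0 \<le> heat_kernel \<sigma> (c - w)" for w by (rule hk_nonneg)
    show "(\<integral>\<^sup>+w. ennreal (heat_kernel \<sigma> (c - w)) \<partial>lborel) = 1"
      by (rule hk_int_shift[OF hk1[OF \<sigma>]])
    show "heat_kernel \<sigma> (c - w) \<le> B0" for w unfolding B0_def by (rule hk_le[OF \<sigma>])
    show "(\<integral>\<^sup>+x. ennreal (heat_kernel t (x::real^'d)) \<partial>lborel) = 1" if "t > 0" for t
      using hk1 that .
  qed
  have K1: "(\<integral>\<^sup>+t. indicator {0<..} t * ennreal (min 1 (min (B0 * Vb)
        (Vb * (2*pi*t) powr (- real CARD('d)/2)))) \<partial>lborel) \<le> ennreal (1 + Vb * (2*pi) powr (- real CARD('d)/2))"
    by (rule K_unif) (use d Vb0 in auto)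
  have K2: "(\<integral>\<^sup>+t. indicator {0<..} t * ennreal (min 1 (min (B0 * Vb)
        (Vb * (2*pi*t) powr (- real CARD('d)/2)))) \<partial>lborel) \<le> ennreal (2 * (Vb * (2*pi) powr (- real CARD('d)/2)) * \<sigma> powr (1 - real CARD('d)/2))"
    unfolding B0_def by (rule K_sigma) (use d Vb0 \<sigma> in auto)
  have cc: "cc0 TYPE('d) = Vb * (2*pi) powr (- real CARD('d)/2)" unfolding cc0_def cV_def Vb_def ..
  have c00: "Vb * (2*pi) powr (- real CARD('d)/2) \<ge> 0" using Vb0 by simp
  have A: "(\<integral>\<^sup>+w. ennreal (heat_kernel \<sigma> (c - w)) * Gf 0 (w::real^'d) \<partial>lborel) \<le> ennreal (cA TYPE('d))"
  proof -
    have "ennreal Vb * ennreal (1 + Vb * (2*pi) powr (- real CARD('d)/2)) = ennreal (cA TYPE('d))"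
    proof -
      have "ennreal Vb * ennreal (1 + Vb * (2*pi) powr (- real CARD('d)/2)) = ennreal (Vb * (1 + Vb * (2*pi) powr (- real CARD('d)/2)))"
        by (rule ennreal_mult[symmetric]) (use Vb0 c00 in auto)
      moreover have "cA TYPE('d) = Vb * (1 + Vb * (2*pi) powr (- real CARD('d)/2))"
        unfolding cA_def cc by (simp add: cV_def Vb_def)
      ultimately show ?thesis by simp
    qed
    then show ?thesis using C mult_left_mono[OF K1, of "ennreal Vb"] by simp
  qed
  have B: "(\<integral>\<^sup>+w. ennreal (heat_kernel \<sigma> (c - w)) * Gf 0 (w::real^'d) \<partial>lborel) \<le> ennreal (cB TYPE('d) * \<sigma> powr (1 - real CARD('d)/2))"
  proof -
    have "ennreal Vb * ennreal (2 * (Vb * (2*pi) powr (- real CARD('d)/2)) * \<sigma> powr (1 - real CARD('d)/2))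
       = ennreal (cB TYPE('d) * \<sigma> powr (1 - real CARD('d)/2))"
    proof -
      have "ennreal Vb * ennreal (2 * (Vb * (2*pi) powr (- real CARD('d)/2)) * \<sigma> powr (1 - real CARD('d)/2)) = ennreal (Vb * (2 * (Vb * (2*pi) powr (- real CARD('d)/2)) * \<sigma> powr (1 - real CARD('d)/2)))"
        by (rule ennreal_mult[symmetric]) (use Vb0 c00 in auto)
      moreover have "cB TYPE('d) * \<sigma> powr (1 - real CARD('d)/2) = Vb * (2 * (Vb * (2*pi) powr (- real CARD('d)/2)) * \<sigma> powr (1 - real CARD('d)/2))"
        unfolding cB_def cc by (simp add: cV_def Vb_def mult_ac)
      ultimately show ?thesis by metis
    qed
    then show ?thesis using C mult_left_mono[OF K2, of "ennreal Vb"] by simp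
  qed
  show ?thesis using A B by (simp add: min_def)
qed

lemma bm_meas: "brownian_motion P Y z \<Longrightarrow> Y t \<in> borel_measurable P"
  unfolding brownian_motion_def by auto
lemma bm_dist: "brownian_motion P Y z \<Longrightarrow> 0 \<le> s \<Longrightarrow> s < t \<Longrightarrow>
   distributed P lborel (\<lambda>\<omega>. Y t \<omega> - Y s \<omega>) (\<lambda>x. ennreal (heat_kernel (t - s) x))"
  unfolding brownian_motion_def by auto
lemma bm_start: "brownian_motion P Y z \<Longrightarrow> \<omega> \<in> space P \<Longrightarrow> Y 0 \<omega> = z"
  unfolding brownian_motion_def by auto

lemma E_diag:
  fixes Y :: "real \<Rightarrow> 'a \<Rightarrow> real^'d"
  assumes d: "CARD('d) \<ge> 5"
    and hk1: "\<And>t. t > 0 \<Longrightarrow> (\<integral>\<^sup>+x. ennreal (heat_kernel t (x::real^'d)) \<partial>lborel) = 1"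
    and bm: "brownian_motion P Y z" and s: "0 \<le> s" and t: "0 \<le> t" and st: "s \<noteq> t"
  shows "(\<integral>\<^sup>+\<omega>. Gf (Y s \<omega>) (Y t \<omega>) \<partial>P) \<le> ennreal (min (cA TYPE('d)) (cB TYPE('d) * \<bar>t - s\<bar> powr (1 - real CARD('d)/2)))"
proof (cases "s < t")
  case True
  note dist = bm_dist[OF bm s True]
  have "(\<integral>\<^sup>+\<omega>. Gf (Y s \<omega>) (Y t \<omega>) \<partial>P) = (\<integral>\<^sup>+\<omega>. Gf 0 (Y t \<omega> - Y s \<omega>) \<partial>P)"
    by (subst Gf_shift) simp
  also have "\<dots> = (\<integral>\<^sup>+x. ennreal (heat_kernel (t - s) x) * Gf 0 (x::real^'d) \<partial>lborel)"
    by (rule distributed_nn_integral[symmetric, OF dist]) measurable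
  also have "\<dots> = (\<integral>\<^sup>+x. ennreal (heat_kernel (t - s) (0 - x)) * Gf 0 (x::real^'d) \<partial>lborel)"
    by (simp add: hk_neg)
  also have "\<dots> \<le> ennreal (min (cA TYPE('d)) (cB TYPE('d) * (t - s) powr (1 - real CARD('d)/2)))"
    by (rule Ebound[OF d hk1]) (use True in auto)
  finally show ?thesis using True by simp
next
  case False
  then have ts: "t < s" using st by simp
  note dist = bm_dist[OF bm t ts]
  have "(\<integral>\<^sup>+\<omega>. Gf (Y s \<omega>) (Y t \<omega>) \<partial>P) = (\<integral>\<^sup>+\<omega>. Gf 0 (- (Y s \<omega> - Y t \<omega>)) \<partial>P)"
    by (subst Gf_shift) simp
  also have "\<dots> = (\<integral>\<^sup>+x. ennreal (heat_kernel (s - t) x) * Gf 0 (- x::real^'d) \<partial>lborel)"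
    by (rule distributed_nn_integral[symmetric, OF dist]) measurable
  also have "\<dots> = (\<integral>\<^sup>+x. ennreal (heat_kernel (s - t) (- x)) * Gf 0 (x::real^'d) \<partial>lborel)"
    using lborel_reflect[of "\<lambda>x. ennreal (heat_kernel (s - t) (- x)) * Gf 0 x"] by simp
  also have "\<dots> = (\<integral>\<^sup>+x. ennreal (heat_kernel (s - t) (0 - x)) * Gf 0 (x::real^'d) \<partial>lborel)"
    by simp
  also have "\<dots> \<le> ennreal (min (cA TYPE('d)) (cB TYPE('d) * (s - t) powr (1 - real CARD('d)/2)))"
    by (rule Ebound[OF d hk1]) (use ts in auto)
  finally show ?thesis using ts by (simp add: abs_if)
qed

lemma E_off_inner:
  fixes U :: "real \<Rightarrow> 'a \<Rightarrow> real^'d"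
  assumes d: "CARD('d) \<ge> 5"
    and hk1: "\<And>t. t > 0 \<Longrightarrow> (\<integral>\<^sup>+x. ennreal (heat_kernel t (x::real^'d)) \<partial>lborel) = 1"
    and bm: "brownian_motion P U z" and s: "0 < s"
  shows "(\<integral>\<^sup>+\<omega>. Gf (U s \<omega>) b \<partial>P) \<le> ennreal (cB TYPE('d) * s powr (1 - real CARD('d)/2))"
proof -
  note dist = bm_dist[OF bm _ s, simplified]
  have "(\<integral>\<^sup>+\<omega>. Gf (U s \<omega>) b \<partial>P) = (\<integral>\<^sup>+\<omega>. Gf 0 ((b - z) - (U s \<omega> - U 0 \<omega>)) \<partial>P)"
    by (intro nn_integral_cong) (simp add: Gf_shift[of _ b] bm_start[OF bm] algebra_simps)
  also have "\<dots> = (\<integral>\<^sup>+x. ennreal (heat_kernel s x) * Gf 0 ((b - z) - x) \<partial>lborel)"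
    by (rule distributed_nn_integral[symmetric, OF dist]) measurable
  also have "\<dots> = (\<integral>\<^sup>+x. ennreal (heat_kernel s ((b - z) - x)) * Gf 0 x \<partial>lborel)"
    using lborel_csub[of "\<lambda>x. ennreal (heat_kernel s ((b - z) - x)) * Gf 0 x" "b - z"] by simp
  also have "\<dots> \<le> ennreal (min (cA TYPE('d)) (cB TYPE('d) * s powr (1 - real CARD('d)/2)))"
    by (rule Ebound[OF d hk1 s])
  also have "\<dots> \<le> ennreal (cB TYPE('d) * s powr (1 - real CARD('d)/2))"
    by (intro ennreal_leI) simp
  finally show ?thesis .
qed

lemma E_off:
  fixes U V :: "real \<Rightarrow> 'a \<Rightarrow> real^'d"
  assumes d: "CARD('d) \<ge> 5"
    and hk1: "\<And>t. t > 0 \<Longrightarrow> (\<integral>\<^sup>+x. ennreal (heat_kernel t (x::real^'d)) \<partial>lborel) = 1"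
    and P: "prob_space P"
    and bmU: "brownian_motion P U z" and bmV: "brownian_motion P V z'" and s: "0 < s"
    and ind: "prob_space.indep_var P borel (U s) borel (V t)"
  shows "(\<integral>\<^sup>+\<omega>. Gf (U s \<omega>) (V t \<omega>) \<partial>P) \<le> ennreal (cB TYPE('d) * s powr (1 - real CARD('d)/2))"
proof -
  interpret prob_space P by fact
  have [measurable]: "U s \<in> borel_measurable P" "V t \<in> borel_measurable P"
    using bm_meas[OF bmU] bm_meas[OF bmV] by auto
  have eq: "distr P borel (U s) \<Otimes>\<^sub>M distr P borel (V t) = distr P (borel \<Otimes>\<^sub>M borel) (\<lambda>\<omega>. (U s \<omega>, V t \<omega>))"
    using ind unfolding indep_var_distribution_eq by auto
  have pU: "prob_space (distr P borel (U s))" by (rule prob_space_distr) simp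
  have pV: "prob_space (distr P borel (V t))" by (rule prob_space_distr) simp
  have ps: "pair_sigma_finite (distr P borel (U s)) (distr P borel (V t))"
    by (intro pair_sigma_finite.intro prob_space_imp_sigma_finite pU pV)
  define Bnd where "Bnd = cB TYPE('d) * s powr (1 - real CARD('d)/2)"
  have "(\<integral>\<^sup>+\<omega>. Gf (U s \<omega>) (V t \<omega>) \<partial>P) = (\<integral>\<^sup>+p. Gf (fst p) (snd p) \<partial>distr P (borel \<Otimes>\<^sub>M borel) (\<lambda>\<omega>. (U s \<omega>, V t \<omega>)))"
    by (subst nn_integral_distr) (auto intro: Gf_meas)
  also have "\<dots> = (\<integral>\<^sup>+p. Gf (fst p) (snd p) \<partial>(distr P borel (U s) \<Otimes>\<^sub>M distr P borel (V t)))"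
    by (simp add: eq)
  also have "\<dots> = (\<integral>\<^sup>+b. (\<integral>\<^sup>+a. Gf a b \<partial>distr P borel (U s)) \<partial>distr P borel (V t))"
    by (subst pair_sigma_finite.nn_integral_snd[OF ps, symmetric]) (auto intro: Gf_meas)
  also have "\<dots> \<le> (\<integral>\<^sup>+b. ennreal Bnd \<partial>distr P borel (V t))"
  proof (rule nn_integral_mono)
    fix b :: "real^'d"
    have "(\<integral>\<^sup>+a. Gf a b \<partial>distr P borel (U s)) = (\<integral>\<^sup>+\<omega>. Gf (U s \<omega>) b \<partial>P)"
      by (subst nn_integral_distr) auto
    also have "\<dots> \<le> ennreal Bnd" unfolding Bnd_def by (rule E_off_inner[OF d hk1 bmU s])
    finally show "(\<integral>\<^sup>+a. Gf a b \<partial>distr P borel (U s)) \<le> ennreal Bnd" .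
  qed
  also have "\<dots> = ennreal Bnd"
    using prob_space.emeasure_space_1[OF pV] by simp
  finally show ?thesis unfolding Bnd_def .
qed




lemma hk1_from:
  assumes P: "prob_space P" and bm: "brownian_motion P Y (z::real^'d)" and t: "t > 0"
  shows "(\<integral>\<^sup>+x. ennreal (heat_kernel t (x::real^'d)) \<partial>lborel) = 1"
proof -
  note dist = bm_dist[OF bm order_refl t]
  have "emeasure P ((\<lambda>\<omega>. Y t \<omega> - Y 0 \<omega>) -` UNIV \<inter> space P) = (\<integral>\<^sup>+x. ennreal (heat_kernel (t - 0) (x::real^'d)) * indicator UNIV x \<partial>lborel)"
    by (rule distributed_emeasure[OF dist]) simp
  then show ?thesis using prob_space.emeasure_space_1[OF P] by simp
qed

lemma F_L_Z:
  assumes L: "L \<ge> 2"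
  shows "F_L X L i j \<omega> = (\<integral>\<^sup>+t. (\<integral>\<^sup>+s. Gf (X i (max 0 s) \<omega>) (X j (max 0 t) \<omega>) * indicator {L/2..L} s * indicator {L/2..L} t \<partial>lborel) \<partial>lborel)"
  unfolding F_L_def Gf_def[symmetric]
proof (intro nn_integral_cong)
  fix t :: real
  show "(\<integral>\<^sup>+s. Gf (X i s \<omega>) (X j t \<omega>) * indicator {L/2..L} s \<partial>lborel) * indicator {L/2..L} t =
        (\<integral>\<^sup>+s. Gf (X i (max 0 s) \<omega>) (X j (max 0 t) \<omega>) * indicator {L/2..L} s * indicator {L/2..L} t \<partial>lborel)"
  proof (cases "t \<in> {L/2..L}")
    case True
    then have mt: "max 0 t = t" using L by auto
    show ?thesis using True mt
    proof (simp, intro nn_integral_cong)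
      fix s :: real
      show "Gf (X i s \<omega>) (X j t \<omega>) * indicator {L/2..L} s = Gf (X i (max 0 s) \<omega>) (X j t \<omega>) * indicator {L/2..L} s"
        using L by (cases "s \<in> {L/2..L}") (auto simp: max_def)
    qed
  qed simp
qed

definition Zp :: "(real \<Rightarrow> 'a \<Rightarrow> 'b) \<Rightarrow> real \<Rightarrow> 'a \<Rightarrow> 'b" where "Zp Y s \<omega> = Y (max 0 s) \<omega>"

definition jm :: "(real \<Rightarrow> 'a \<Rightarrow> 'b::topological_space) \<Rightarrow> 'a measure \<Rightarrow> bool" where
  "jm Y P \<longleftrightarrow> (\<lambda>p. Zp Y (fst p) (snd p)) \<in> borel_measurable (borel \<Otimes>\<^sub>M P)"

lemma Zp_meas[measurable (raw)]:
  assumes "g \<in> measurable M P" and "f \<in> borel_measurable M" and "jm Y P"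
  shows "(\<lambda>x. Zp Y (f x) (g x) :: 'b::topological_space) \<in> borel_measurable M"
  using measurable_compose[OF measurable_Pair[OF assms(2,1)] assms(3)[unfolded jm_def]] by simp

lemma EF_eq:
  fixes X :: "nat \<Rightarrow> real \<Rightarrow> 'a \<Rightarrow> real^'d"
  assumes P: "prob_space P" and bmi: "brownian_motion P (X i) zi" and bmj: "brownian_motion P (X j) zj"
    and L: "L \<ge> 2"
  shows "(\<lambda>\<omega>. F_L X L i j \<omega>) \<in> borel_measurable P"
    and "(\<integral>\<^sup>+\<omega>. F_L X L i j \<omega> \<partial>P) = (\<integral>\<^sup>+t. (\<integral>\<^sup>+s. (\<integral>\<^sup>+\<omega>. Gf (X i s \<omega>) (X j t \<omega>) \<partial>P) * indicator {L/2..L} s * indicator {L/2..L} t \<partial>lborel) \<partial>lborel)"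
proof -
  interpret prob_space P by fact
  have [simp]: "jm (X i) P"
    unfolding jm_def Zp_def by (rule BM_joint_meas[OF bmi])
  have [simp]: "jm (X j) P"
    unfolding jm_def Zp_def by (rule BM_joint_meas[OF bmj])
  have [measurable]: "X i s \<in> borel_measurable P" "X j s \<in> borel_measurable P" for s
    using bm_meas[OF bmi] bm_meas[OF bmj] by auto
  have FZ: "F_L X L i j \<omega> = (\<integral>\<^sup>+t. (\<integral>\<^sup>+s. Gf (Zp (X i) s \<omega>) (Zp (X j) t \<omega>) * indicator {L/2..L} s * indicator {L/2..L} t \<partial>lborel) \<partial>lborel)" for \<omega>
    unfolding Zp_def by (rule F_L_Z[OF L])
  show "(\<lambda>\<omega>. F_L X L i j \<omega>) \<in> borel_measurable P"
    unfolding FZ by measurable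
  have ps: "pair_sigma_finite P (lborel::real measure)"
    by (intro pair_sigma_finite.intro prob_space_imp_sigma_finite P lborel.sigma_finite_measure_axioms)
  have "(\<integral>\<^sup>+\<omega>. F_L X L i j \<omega> \<partial>P) = (\<integral>\<^sup>+\<omega>. (\<integral>\<^sup>+t. (\<integral>\<^sup>+s. Gf (Zp (X i) s \<omega>) (Zp (X j) t \<omega>) * indicator {L/2..L} s * indicator {L/2..L} t \<partial>lborel) \<partial>lborel) \<partial>P)"
    unfolding FZ ..
  also have "\<dots> = (\<integral>\<^sup>+t. (\<integral>\<^sup>+\<omega>. (\<integral>\<^sup>+s. Gf (Zp (X i) s \<omega>) (Zp (X j) t \<omega>) * indicator {L/2..L} s * indicator {L/2..L} t \<partial>lborel) \<partial>P) \<partial>lborel)"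
    by (rule pair_sigma_finite.Fubini'[OF ps, symmetric]) measurable
  also have "\<dots> = (\<integral>\<^sup>+t. (\<integral>\<^sup>+s. (\<integral>\<^sup>+\<omega>. Gf (Zp (X i) s \<omega>) (Zp (X j) t \<omega>) * indicator {L/2..L} s * indicator {L/2..L} t \<partial>P) \<partial>lborel) \<partial>lborel)"
    by (intro nn_integral_cong pair_sigma_finite.Fubini'[OF ps, symmetric]) measurable
  also have "\<dots> = (\<integral>\<^sup>+t. (\<integral>\<^sup>+s. (\<integral>\<^sup>+\<omega>. Gf (X i s \<omega>) (X j t \<omega>) \<partial>P) * indicator {L/2..L} s * indicator {L/2..L} t \<partial>lborel) \<partial>lborel)"
  proof (intro nn_integral_cong)
    fix s t :: real
    show "(\<integral>\<^sup>+\<omega>. Gf (Zp (X i) s \<omega>) (Zp (X j) t \<omega>) * indicator {L/2..L} s * indicator {L/2..L} t \<partial>P) =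
          (\<integral>\<^sup>+\<omega>. Gf (X i s \<omega>) (X j t \<omega>) \<partial>P) * indicator {L/2..L} s * indicator {L/2..L} t"
    proof (cases "s \<in> {L/2..L} \<and> t \<in> {L/2..L}")
      case True
      then have "max 0 s = s" "max 0 t = t" using L by auto
      then show ?thesis using True by (simp add: Zp_def)
    qed auto
  qed
  finally show "(\<integral>\<^sup>+\<omega>. F_L X L i j \<omega> \<partial>P) = (\<integral>\<^sup>+t. (\<integral>\<^sup>+s. (\<integral>\<^sup>+\<omega>. Gf (X i s \<omega>) (X j t \<omega>) \<partial>P) * indicator {L/2..L} s * indicator {L/2..L} t \<partial>lborel) \<partial>lborel)" .
qed




lemma pow32_int: "(\<integral>\<^sup>+u. ennreal (indicator {1..} u * u powr (-3/2)) \<partial>lborel) = 2"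
proof -
  have "((\<lambda>x. x powr (-3/2::real)) has_integral -(1 powr (-3/2+1)) / (-3/2+1)) {1..}"
    by (rule has_integral_powr_to_inf) auto
  then have h: "((\<lambda>x. x powr (-3/2::real)) has_integral 2) {1..}" by simp
  show ?thesis using nn_integral_has_integral_lebesgue[OF _ h] by simp
qed

lemma pow32_right: "B \<ge> 0 \<Longrightarrow> (\<integral>\<^sup>+s. ennreal (B * (indicator {t+1..} s * (s - t) powr (-3/2))) \<partial>lborel) = ennreal (2 * B)"
proof -
  assume B: "B \<ge> 0"
  have "(\<integral>\<^sup>+s. ennreal (B * (indicator {t+1..} s * (s - t) powr (-3/2))) \<partial>lborel)
      = ennreal \<bar>1::real\<bar> * (\<integral>\<^sup>+x. ennreal (B * (indicator {t+1..} (t + 1 * x) * ((t + 1 * x) - t) powr (-3/2))) \<partial>lborel)"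
    by (rule nn_integral_real_affine) auto
  also have "\<dots> = (\<integral>\<^sup>+x. ennreal B * ennreal (indicator {1..} x * x powr (-3/2)) \<partial>lborel)"
    using B by (simp only: abs_one abs_neg_one ennreal_1 mult_1, intro nn_integral_cong) (auto simp: indicator_def ennreal_mult)
  also have "\<dots> = ennreal B * 2"
    using pow32_int by (subst nn_integral_cmult) auto
  finally show ?thesis using B by (simp add: ennreal_mult mult.commute)
qed

lemma pow32_left: "B \<ge> 0 \<Longrightarrow> (\<integral>\<^sup>+s. ennreal (B * (indicator {..t-1} s * (t - s) powr (-3/2))) \<partial>lborel) = ennreal (2 * B)"
proof -
  assume B: "B \<ge> 0"
  have "(\<integral>\<^sup>+s. ennreal (B * (indicator {..t-1} s * (t - s) powr (-3/2))) \<partial>lborel)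
      = ennreal \<bar>-1::real\<bar> * (\<integral>\<^sup>+x. ennreal (B * (indicator {..t-1} (t + (-1) * x) * (t - (t + (-1) * x)) powr (-3/2))) \<partial>lborel)"
    by (rule nn_integral_real_affine) auto
  also have "\<dots> = (\<integral>\<^sup>+x. ennreal B * ennreal (indicator {1..} x * x powr (-3/2)) \<partial>lborel)"
    using B by (simp only: abs_one abs_neg_one ennreal_1 mult_1, intro nn_integral_cong) (auto simp: indicator_def ennreal_mult)
  also have "\<dots> = ennreal B * 2"
    using pow32_int by (subst nn_integral_cmult) auto
  finally show ?thesis using B by (simp add: ennreal_mult mult.commute)
qed

lemma pt_real:
  fixes s t A B e :: real
  assumes A: "A \<ge> 0" and B: "B \<ge> 0" and e: "e \<le> -3/2" and st: "s \<noteq> t"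
  shows "min A (B * \<bar>t - s\<bar> powr e) \<le> A * indicator {t-1..t+1} s + B * (indicator {t+1..} s * (s - t) powr (-3/2))
              + B * (indicator {..t-1} s * (t - s) powr (-3/2))"
proof -
  define a where "a = A * indicator {t-1..t+1} s"
  define b where "b = B * (indicator {t+1..} s * (s - t) powr (-3/2))"
  define c where "c = B * (indicator {..t-1} s * (t - s) powr (-3/2))"
  have a0: "a \<ge> 0" unfolding a_def using A by simp
  have b0: "b \<ge> 0" unfolding b_def using B by simp
  have c0: "c \<ge> 0" unfolding c_def using B by simp
  have "min A (B * \<bar>t - s\<bar> powr e) \<le> a + b + c"
  proof (cases "\<bar>t - s\<bar> \<le> 1")
    case True
    then have "s \<in> {t-1..t+1}" by (simp add: abs_le_iff)
    then have "a = A" unfolding a_def by simp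
    then show ?thesis using b0 c0 by linarith
  next
    case False
    have p: "\<bar>t - s\<bar> powr e \<le> \<bar>t - s\<bar> powr (-3/2)"
      by (rule powr_mono) (use e False in auto)
    have m: "min A (B * \<bar>t - s\<bar> powr e) \<le> B * \<bar>t - s\<bar> powr (-3/2)"
      using mult_left_mono[OF p B] by linarith
    show ?thesis
    proof (cases "s > t")
      case True
      then have "s \<in> {t+1..}" "\<bar>t - s\<bar> = s - t" using False by auto
      then have "b = B * \<bar>t - s\<bar> powr (-3/2)" unfolding b_def by simp
      then show ?thesis using m a0 c0 by linarith
    next
      case False2: False
      then have "s \<in> {..t-1}" "\<bar>t - s\<bar> = t - s" using False by auto
      then have "c = B * \<bar>t - s\<bar> powr (-3/2)" unfolding c_def by simp
      then show ?thesis using m a0 b0 by linarith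
    qed
  qed
  then show ?thesis unfolding a_def b_def c_def .
qed

lemma diag_int:
  fixes E :: "real \<Rightarrow> real \<Rightarrow> ennreal"
  assumes L: "L \<ge> 2" and e: "e \<le> -3/2" and A: "A \<ge> 0" and B: "B \<ge> 0"
    and EB: "\<And>s t. s \<in> {L/2..L} \<Longrightarrow> t \<in> {L/2..L} \<Longrightarrow> s \<noteq> t \<Longrightarrow> E s t \<le> ennreal (min A (B * \<bar>t - s\<bar> powr e))"
  shows "(\<integral>\<^sup>+t. (\<integral>\<^sup>+s. E s t * indicator {L/2..L} s * indicator {L/2..L} t \<partial>lborel) \<partial>lborel) \<le> ennreal ((A + 2 * B) * L)"
proof -
  define g1 where "g1 t s = ennreal (A * indicator {t-1..t+1} s)" for t s :: real
  define g2 where "g2 t s = ennreal (B * (indicator {t+1..} s * (s - t) powr (-3/2)))" for t s :: real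
  define g3 where "g3 t s = ennreal (B * (indicator {..t-1} s * (t - s) powr (-3/2)))" for t s :: real
  have m1[measurable]: "g1 t \<in> borel_measurable lborel" for t unfolding g1_def by measurable
  have m2[measurable]: "g2 t \<in> borel_measurable lborel" for t unfolding g2_def by measurable
  have m3[measurable]: "g3 t \<in> borel_measurable lborel" for t unfolding g3_def by measurable
  have i1: "(\<integral>\<^sup>+s. g1 t s \<partial>lborel) = ennreal (2 * A)" for t
  proof -
    have "(\<integral>\<^sup>+s. g1 t s \<partial>lborel) = (\<integral>\<^sup>+s. ennreal A * indicator {t-1..t+1} s \<partial>lborel)"
      unfolding g1_def by (intro nn_integral_cong) (simp add: indicator_def)
    also have "\<dots> = ennreal A * ennreal 2" by (simp add: nn_integral_cmult_indicator)
    also have "\<dots> = ennreal (A * 2)" by (rule ennreal_mult[symmetric]) (use A in auto)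
    also have "\<dots> = ennreal (2 * A)" by (simp add: mult.commute)
    finally show ?thesis .
  qed
  have i2: "(\<integral>\<^sup>+s. g2 t s \<partial>lborel) = ennreal (2 * B)" for t
    unfolding g2_def by (rule pow32_right[OF B])
  have i3: "(\<integral>\<^sup>+s. g3 t s \<partial>lborel) = ennreal (2 * B)" for t
    unfolding g3_def by (rule pow32_left[OF B])
  have gint: "(\<integral>\<^sup>+s. g1 t s + g2 t s + g3 t s \<partial>lborel) = ennreal (2 * A + 4 * B)" for t
  proof -
    have "(\<integral>\<^sup>+s. g1 t s + g2 t s + g3 t s \<partial>lborel) = (\<integral>\<^sup>+s. g1 t s + g2 t s \<partial>lborel) + (\<integral>\<^sup>+s. g3 t s \<partial>lborel)"
      by (rule nn_integral_add) measurable
    also have "(\<integral>\<^sup>+s. g1 t s + g2 t s \<partial>lborel) = (\<integral>\<^sup>+s. g1 t s \<partial>lborel) + (\<integral>\<^sup>+s. g2 t s \<partial>lborel)"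
      by (rule nn_integral_add) measurable
    finally have s1: "(\<integral>\<^sup>+s. g1 t s + g2 t s + g3 t s \<partial>lborel) = ennreal (2 * A) + ennreal (2 * B) + ennreal (2 * B)"
      unfolding i1 i2 i3 .
    have "ennreal (2 * A) + ennreal (2 * B) + ennreal (2 * B) = ennreal (2 * A + 2 * B + 2 * B)"
      using A B by (simp add: ennreal_plus[symmetric] del: ennreal_plus)
    also have "2 * A + 2 * B + 2 * B = 2 * A + 4 * B" by simp
    finally show ?thesis using s1 by simp
  qed
  have inner: "(\<integral>\<^sup>+s. E s t * indicator {L/2..L} s * indicator {L/2..L} t \<partial>lborel) \<le> ennreal (2 * A + 4 * B) * indicator {L/2..L} t" for t
  proof (cases "t \<in> {L/2..L}")
    case True
    have "(\<integral>\<^sup>+s. E s t * indicator {L/2..L} s * indicator {L/2..L} t \<partial>lborel) \<le> (\<integral>\<^sup>+s. g1 t s + g2 t s + g3 t s \<partial>lborel)"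
    proof (rule nn_integral_mono_AE)
      show "AE s in lborel. E s t * indicator {L/2..L} s * indicator {L/2..L} t \<le> g1 t s + g2 t s + g3 t s"
        using AE_lborel_singleton[of t]
      proof eventually_elim
        case (elim s)
        show ?case
        proof (cases "s \<in> {L/2..L}")
          case sIn: True
          have Est: "E s t \<le> ennreal (min A (B * \<bar>t - s\<bar> powr e))" using EB[OF sIn True] elim by simp
          have r: "min A (B * \<bar>t - s\<bar> powr e) \<le> A * indicator {t-1..t+1} s + B * (indicator {t+1..} s * (s - t) powr (-3/2))
              + B * (indicator {..t-1} s * (t - s) powr (-3/2))"
            by (rule pt_real[OF A B e]) (use elim in auto)
          have "g1 t s + g2 t s + g3 t s = ennreal (A * indicator {t-1..t+1} s + B * (indicator {t+1..} s * (s - t) powr (-3/2))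
              + B * (indicator {..t-1} s * (t - s) powr (-3/2)))"
            unfolding g1_def g2_def g3_def using A B by simp
          then have "ennreal (min A (B * \<bar>t - s\<bar> powr e)) \<le> g1 t s + g2 t s + g3 t s"
            using ennreal_leI[OF r] by simp
          then show ?thesis using Est sIn True by simp
        qed simp
      qed
    qed
    then show ?thesis using True gint by simp
  qed simp
  have "(\<integral>\<^sup>+t. (\<integral>\<^sup>+s. E s t * indicator {L/2..L} s * indicator {L/2..L} t \<partial>lborel) \<partial>lborel)
     \<le> (\<integral>\<^sup>+t. ennreal (2 * A + 4 * B) * indicator {L/2..L} t \<partial>lborel)"
    by (intro nn_integral_mono inner)
  also have "\<dots> = ennreal (2 * A + 4 * B) * ennreal (L / 2)"
    using L by (simp add: nn_integral_cmult_indicator)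
  also have "\<dots> = ennreal ((2 * A + 4 * B) * (L / 2))"
    by (rule ennreal_mult[symmetric]) (use A B L in auto)
  also have "(2 * A + 4 * B) * (L / 2) = (A + 2 * B) * L" by (simp add: algebra_simps)
  finally show ?thesis .
qed

lemma off_int:
  fixes E :: "real \<Rightarrow> real \<Rightarrow> ennreal"
  assumes L: "L \<ge> 2" and e: "e \<le> 0" and B: "B \<ge> 0"
    and EB: "\<And>s t. s \<in> {L/2..L} \<Longrightarrow> t \<in> {L/2..L} \<Longrightarrow> E s t \<le> ennreal (B * s powr e)"
  shows "(\<integral>\<^sup>+t. (\<integral>\<^sup>+s. E s t * indicator {L/2..L} s * indicator {L/2..L} t \<partial>lborel) \<partial>lborel) \<le> ennreal (B * (L/2) powr (e + 2))"
proof -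
  define c where "c = B * (L/2) powr e"
  have c0: "c \<ge> 0" unfolding c_def using B by simp
  have pt: "E s t * indicator {L/2..L} s * indicator {L/2..L} t \<le> ennreal c * indicator {L/2..L} s * indicator {L/2..L} t" for s t
  proof (cases "s \<in> {L/2..L} \<and> t \<in> {L/2..L}")
    case True
    have "s powr e \<le> (L/2) powr e" by (rule powr_mono2') (use True e L in auto)
    then have "B * s powr e \<le> c" unfolding c_def using B by (simp add: mult_left_mono)
    then have "E s t \<le> ennreal c" using EB[of s t] True by (meson ennreal_leI order.trans)
    then show ?thesis using True by simp
  qed auto
  have "(\<integral>\<^sup>+t. (\<integral>\<^sup>+s. E s t * indicator {L/2..L} s * indicator {L/2..L} t \<partial>lborel) \<partial>lborel)
      \<le> (\<integral>\<^sup>+t. (\<integral>\<^sup>+s. ennreal c * indicator {L/2..L} s * indicator {L/2..L} t \<partial>lborel) \<partial>lborel)"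
    by (intro nn_integral_mono pt)
  also have "\<dots> = (\<integral>\<^sup>+t. ennreal (c * (L/2)) * indicator {L/2..L} t \<partial>lborel)"
  proof (intro nn_integral_cong)
    fix t :: real
    have "(\<integral>\<^sup>+s. ennreal c * indicator {L/2..L} s * indicator {L/2..L} t \<partial>lborel) = (\<integral>\<^sup>+s. ennreal c * indicator {L/2..L} s \<partial>lborel) * indicator {L/2..L} t"
      by (subst nn_integral_multc) auto
    also have "\<dots> = ennreal c * ennreal (L/2) * indicator {L/2..L} t"
      using L c0 by (simp add: nn_integral_cmult_indicator)
    also have "ennreal c * ennreal (L/2) = ennreal (c * (L/2))"
      by (rule ennreal_mult[symmetric]) (use c0 L in auto)
    finally show "(\<integral>\<^sup>+s. ennreal c * indicator {L/2..L} s * indicator {L/2..L} t \<partial>lborel) = ennreal (c * (L/2)) * indicator {L/2..L} t" .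
  qed
  also have "\<dots> = ennreal (c * (L/2)) * ennreal (L/2)"
    using L by (simp add: nn_integral_cmult_indicator)
  also have "\<dots> = ennreal (B * (L/2) powr (e + 2))"
  proof -
    have "c * (L/2) * (L/2) = B * (L/2) powr (e + 2)"
      unfolding c_def using L by (simp add: powr_add power2_eq_square)
    then show ?thesis using c0 L by (simp add: ennreal_mult[symmetric])
  qed
  finally show ?thesis .
qed




lemma indep_pair:
  fixes X :: "nat \<Rightarrow> real \<Rightarrow> 'a \<Rightarrow> real^'d"
  assumes P: "prob_space P"
    and ind: "prob_space.indep_vars P (\<lambda>_. Pi\<^sub>M {0..} (\<lambda>_. borel)) (\<lambda>i \<omega>. restrict (\<lambda>t. X i t \<omega>) {0..}) UNIV"
    and ij: "i \<noteq> j" and s: "0 \<le> s" and t: "0 \<le> t"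
  shows "prob_space.indep_var P borel (X i s) borel (X j t)"
proof -
  interpret prob_space P by fact
  define R where "R = (\<lambda>i \<omega>. restrict (\<lambda>t. X i t \<omega>) {0..})"
  have 1: "indep_var (Pi\<^sub>M {i} (\<lambda>_. Pi\<^sub>M {0..} (\<lambda>_. borel))) (\<lambda>\<omega>. restrict (\<lambda>k. R k \<omega>) {i})
                     (Pi\<^sub>M {j} (\<lambda>_. Pi\<^sub>M {0..} (\<lambda>_. borel))) (\<lambda>\<omega>. restrict (\<lambda>k. R k \<omega>) {j})"
    by (rule indep_var_restrict[OF ind[folded R_def]]) (use ij in auto)
  have mi: "(\<lambda>f. f i s) \<in> measurable (Pi\<^sub>M {i} (\<lambda>_. Pi\<^sub>M {0..} (\<lambda>_. borel))) (borel :: (real^'d) measure)"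
  proof -
    have c1: "(\<lambda>f. f i) \<in> measurable (Pi\<^sub>M {i} (\<lambda>_. Pi\<^sub>M {0..} (\<lambda>_. borel))) (Pi\<^sub>M {0..} (\<lambda>_. borel :: (real^'d) measure))"
      by (rule measurable_component_singleton) simp
    have c2: "(\<lambda>g. g s) \<in> measurable (Pi\<^sub>M {0..} (\<lambda>_. borel :: (real^'d) measure)) borel"
      by (rule measurable_component_singleton) (use s in simp)
    show ?thesis using measurable_compose[OF c1 c2] .
  qed
  have mj: "(\<lambda>f. f j t) \<in> measurable (Pi\<^sub>M {j} (\<lambda>_. Pi\<^sub>M {0..} (\<lambda>_. borel))) (borel :: (real^'d) measure)"
  proof -
    have c1: "(\<lambda>f. f j) \<in> measurable (Pi\<^sub>M {j} (\<lambda>_. Pi\<^sub>M {0..} (\<lambda>_. borel))) (Pi\<^sub>M {0..} (\<lambda>_. borel :: (real^'d) measure))"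
      by (rule measurable_component_singleton) simp
    have c2: "(\<lambda>g. g t) \<in> measurable (Pi\<^sub>M {0..} (\<lambda>_. borel :: (real^'d) measure)) borel"
      by (rule measurable_component_singleton) (use t in simp)
    show ?thesis using measurable_compose[OF c1 c2] .
  qed
  have 2: "indep_var borel ((\<lambda>f. f i s) \<circ> (\<lambda>\<omega>. restrict (\<lambda>k. R k \<omega>) {i})) borel ((\<lambda>f. f j t) \<circ> (\<lambda>\<omega>. restrict (\<lambda>k. R k \<omega>) {j}))"
    by (rule indep_var_compose[OF 1 mi mj])
  have "(\<lambda>f. f i s) \<circ> (\<lambda>\<omega>. restrict (\<lambda>k. R k \<omega>) {i}) = X i s" using s by (auto simp: R_def)
  moreover have "(\<lambda>f. f j t) \<circ> (\<lambda>\<omega>. restrict (\<lambda>k. R k \<omega>) {j}) = X j t" using t by (auto simp: R_def)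
  ultimately show ?thesis using 2 by simp
qed

theorem lemma2p2:
  assumes "CARD('d) \<ge> 5"
  shows "\<exists>C::real. \<forall>(P::'a measure) (X::nat \<Rightarrow> real \<Rightarrow> 'a \<Rightarrow> real ^ 'd) (z::nat \<Rightarrow> real ^ 'd).
           prob_space P \<and>
           (\<forall>i. brownian_motion P (X i) (z i)) \<and>
           prob_space.indep_vars P (\<lambda>_. Pi\<^sub>M {0..} (\<lambda>_. borel))
              (\<lambda>i \<omega>. restrict (\<lambda>t. X i t \<omega>) {0..}) UNIV
           \<longrightarrow> (\<forall>(M::nat) (L::real). M \<ge> 1 \<and> L \<ge> 2 \<longrightarrow>
                 (\<integral>\<^sup>+ \<omega>. (\<Sum>i\<in>{1..M}. \<Sum>j\<in>{1..M}. F_L X L i j \<omega>) \<partial>P)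
                 \<le> ennreal (C * (real M * L + (real M)\<^sup>2 * L powr (3 - real CARD('d) / 2))))"
proof -
  note d = assms
  define C1 where "C1 = cA TYPE('d) + 2 * cB TYPE('d)"
  define C2 where "C2 = cB TYPE('d) * 2 powr (real CARD('d)/2 - 3)"
  have C1p: "C1 \<ge> 0" unfolding C1_def using cA_nonneg[of "TYPE('d)"] cB_nonneg[of "TYPE('d)"] by simp
  have C2p: "C2 \<ge> 0" unfolding C2_def using cB_nonneg[of "TYPE('d)"] by simp
  show ?thesis
  proof (intro exI[of _ "C1 + C2"] allI impI)
    fix P :: "'a measure" and X :: "nat \<Rightarrow> real \<Rightarrow> 'a \<Rightarrow> real ^ 'd" and z :: "nat \<Rightarrow> real ^ 'd" and M :: nat and L :: real
    assume H: "prob_space P \<and>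
           (\<forall>i. brownian_motion P (X i) (z i)) \<and>
           prob_space.indep_vars P (\<lambda>_. Pi\<^sub>M {0..} (\<lambda>_. borel))
              (\<lambda>i \<omega>. restrict (\<lambda>t. X i t \<omega>) {0..}) UNIV"
    assume HML: "M \<ge> 1 \<and> L \<ge> 2"
    from H have P: "prob_space P" and bm: "\<And>i. brownian_motion P (X i) (z i)"
      and ind: "prob_space.indep_vars P (\<lambda>_. Pi\<^sub>M {0..} (\<lambda>_. borel)) (\<lambda>i \<omega>. restrict (\<lambda>t. X i t \<omega>) {0..}) UNIV"
      by auto
    from HML have L: "L \<ge> 2" by auto
    have hk1: "\<And>t. t > 0 \<Longrightarrow> (\<integral>\<^sup>+x. ennreal (heat_kernel t (x::real^'d)) \<partial>lborel) = 1"
      by (rule hk1_from[OF P bm[of 0]])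
    have Fmeas[measurable]: "(\<lambda>\<omega>. F_L X L i j \<omega>) \<in> borel_measurable P" for i j
      by (rule EF_eq(1)[OF P bm bm L])
    define Lp where "Lp = L powr (3 - real CARD('d) / 2)"
    have Lp0: "Lp \<ge> 0" unfolding Lp_def by simp
    have Fb: "(\<integral>\<^sup>+\<omega>. F_L X L i j \<omega> \<partial>P) \<le> ennreal ((if i = j then C1 * L else 0) + C2 * Lp)" for i j
    proof (cases "i = j")
      case True
      have "(\<integral>\<^sup>+\<omega>. F_L X L i i \<omega> \<partial>P) \<le> ennreal ((cA TYPE('d) + 2 * cB TYPE('d)) * L)"
        unfolding EF_eq(2)[OF P bm bm L]
      proof (rule diag_int[OF L _ cA_nonneg cB_nonneg])
        show "1 - real CARD('d) / 2 \<le> -3/2" using d by simp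
        fix s t :: real assume s: "s \<in> {L/2..L}" and t: "t \<in> {L/2..L}" and st: "s \<noteq> t"
        show "(\<integral>\<^sup>+\<omega>. Gf (X i s \<omega>) (X i t \<omega>) \<partial>P) \<le> ennreal (min (cA TYPE('d)) (cB TYPE('d) * \<bar>t - s\<bar> powr (1 - real CARD('d) / 2)))"
          by (rule E_diag[OF d hk1 bm]) (use s t st L in auto)
      qed
      also have "\<dots> \<le> ennreal ((if i = j then C1 * L else 0) + C2 * Lp)"
        using True C2p Lp0 by (intro ennreal_leI) (simp add: C1_def)
      finally show ?thesis using True by simp
    next
      case False
      have "(\<integral>\<^sup>+\<omega>. F_L X L i j \<omega> \<partial>P) \<le> ennreal (cB TYPE('d) * (L/2) powr ((1 - real CARD('d) / 2) + 2))"
        unfolding EF_eq(2)[OF P bm bm L]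
      proof (rule off_int[OF L _ cB_nonneg])
        show "1 - real CARD('d) / 2 \<le> 0" using d by simp
        fix s t :: real assume s: "s \<in> {L/2..L}" and t: "t \<in> {L/2..L}"
        have s0: "s > 0" using s L by auto
        show "(\<integral>\<^sup>+\<omega>. Gf (X i s \<omega>) (X j t \<omega>) \<partial>P) \<le> ennreal (cB TYPE('d) * s powr (1 - real CARD('d) / 2))"
          by (rule E_off[OF d hk1 P bm bm s0 indep_pair[OF P ind False]]) (use s t L in auto)
      qed
      also have "cB TYPE('d) * (L/2) powr ((1 - real CARD('d) / 2) + 2) = C2 * Lp"
      proof -
        define a where "a = 3 - real CARD('d) / 2"
        have e1: "(1 - real CARD('d) / 2) + 2 = a" unfolding a_def by simp
        have e2: "(L/2) powr a = L powr a / 2 powr a" using L by (simp add: powr_divide)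
        have e3: "2 powr (real CARD('d)/2 - 3) = 1 / 2 powr a"
        proof -
          have "2 powr (- a) = 1 / 2 powr a" by (rule powr_minus_divide)
          moreover have "- a = real CARD('d)/2 - 3" unfolding a_def by simp
          ultimately show ?thesis by simp
        qed
        have "cB TYPE('d) * (L/2) powr ((1 - real CARD('d) / 2) + 2) = cB TYPE('d) * (L powr a / 2 powr a)"
          unfolding e1 e2 ..
        also have "\<dots> = cB TYPE('d) * (1 / 2 powr a) * L powr a" by simp
        also have "\<dots> = C2 * Lp" unfolding C2_def Lp_def e3 a_def ..
        finally show ?thesis .
      qed
      also have "ennreal (C2 * Lp) \<le> ennreal ((if i = j then C1 * L else 0) + C2 * Lp)"
        using False by simp
      finally show ?thesis .
    qed
    have "(\<integral>\<^sup>+ \<omega>. (\<Sum>i\<in>{1..M}. \<Sum>j\<in>{1..M}. F_L X L i j \<omega>) \<partial>P) = (\<Sum>i\<in>{1..M}. \<Sum>j\<in>{1..M}. (\<integral>\<^sup>+\<omega>. F_L X L i j \<omega> \<partial>P))"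
      by (simp add: nn_integral_sum)
    also have "\<dots> \<le> (\<Sum>i\<in>{1..M}. \<Sum>j\<in>{1..M}. ennreal ((if i = j then C1 * L else 0) + C2 * Lp))"
      by (intro sum_mono Fb)
    also have "\<dots> = ennreal (\<Sum>i\<in>{1..M}. \<Sum>j\<in>{1..M}. ((if i = j then C1 * L else 0) + C2 * Lp))"
    proof -
      define f where "f i j = (if i = j then C1 * L else 0) + C2 * Lp" for i j :: nat
      have fnn: "0 \<le> f i j" for i j unfolding f_def using C1p C2p Lp0 L by simp
      have "(\<Sum>i\<in>{1..M}. \<Sum>j\<in>{1..M}. ennreal (f i j)) = (\<Sum>i\<in>{1..M}. ennreal (\<Sum>j\<in>{1..M}. f i j))"
        by (intro sum.cong refl sum_ennreal fnn)
      also have "\<dots> = ennreal (\<Sum>i\<in>{1..M}. \<Sum>j\<in>{1..M}. f i j)"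
        by (intro sum_ennreal sum_nonneg fnn)
      finally show ?thesis unfolding f_def .
    qed
    also have "(\<Sum>i\<in>{1..M}. \<Sum>j\<in>{1..M}. ((if i = j then C1 * L else 0) + C2 * Lp)) = real M * (C1 * L + real M * C2 * Lp)"
      by (simp add: sum.distrib)
    also have "\<dots> \<le> (C1 + C2) * (real M * L + (real M)\<^sup>2 * Lp)"
    proof -
      have "0 \<le> C2 * real M * L + C1 * (real M)\<^sup>2 * Lp" using C1p C2p Lp0 L by simp
      then show ?thesis by (simp add: algebra_simps power2_eq_square)
    qed
    finally show "(\<integral>\<^sup>+ \<omega>. (\<Sum>i\<in>{1..M}. \<Sum>j\<in>{1..M}. F_L X L i j \<omega>) \<partial>P)
                 \<le> ennreal ((C1 + C2) * (real M * L + (real M)\<^sup>2 * L powr (3 - real CARD('d) / 2)))"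
      unfolding Lp_def by (simp add: ennreal_leI)
  qed
qed


end
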